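(* Let $k\in\mathbb N$ and let $\mathbb D_0=(D_0,V_0)$, $\mathbb D_1=(D_1,V_1)$ be monadic models. The following are equivalent: (1) $\mathbb D_0$ and $\mathbb D_1$ satisfy exactly the same $\mathrm{FOE}^\infty(A)$-sentences of quantifier rank at most $k$; (2) $\mathbb D_0\sim^\infty_k\mathbb D_1$; (3) player $\exists$ has a winning strategy in the game $\mathrm{EF}^\infty_k(\mathbb D_0,\mathbb D_1)$.
   Context: Fix a finite set $A$ of unary predicate symbols. A monadic model is a pair $(D,V)$ with $D$ a set (possibly empty) and $V:A\to\wp(D)$. $\mathrm{FOE}^\infty(A)$ is monadic first-order logic with equality over $A$ extended with the quantifiers $\exists^\infty$ ("there are infinitely many") and $\forall^\infty$ ("all but finitely many"), formulas in negation normal form. On nonempty models the semantics is standard; on the empty model a sentence $Qx.\varphi$ is false for $Q\in\{\exists,\exists^\infty\}$ and true for $Q\in\{\forall,\forall^\infty\}$. Quantifier rank counts nested quantifiers of all four kinds. For $S\subseteq A$, $|S|_{\mathbb D}$ is the number of elements $d$ with $\{a:d\in V(a)\}=S$. The relation $\sim^\infty_0$ relates all models; for $k\ge1$, $\mathbb D\sim^\infty_k\mathbb D'$ iff for every $S\subseteq A$: $|S|_{\mathbb D}=|S|_{\mathbb D'}<k$, or $k\le|S|_{\mathbb D},|S|_{\mathbb D'}<\omega$, or both $|S|_{\mathbb D},|S|_{\mathbb D'}$ are infinite. A partial isomorphism is an injective partial map $f:D_0\rightharpoonup D_1$ with $d\in V_0(a)\iff f(d)\in V_1(a)$ for all $a$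 and $d$ in its domain. The game $\mathrm{EF}^\infty_k(\mathbb D_0,\mathbb D_1)$ has $k$ rounds, positions being pairs of equal-length sequences $\vec s_0,\vec s_1$ (initially empty). In each round $\forall$ chooses either (a) a second-order move: $\forall$ picks an infinite $X_i\subseteq D_i$ in one model, $\exists$ responds with an infinite $X_{1-i}\subseteq D_{1-i}$, $\forall$ picks $d_{1-i}\in X_{1-i}$, and $\exists$ responds with $d_i\in X_i$; or (b) a first-order move: $\forall$ picks $d_i\in D_i$ and $\exists$ responds with $d_{1-i}\in D_{1-i}$. The sequences are extended by $d_0$ resp. $d_1$; $\exists$ survives the round if she is not stuck and the map $\vec s_0\mapsto\vec s_1$ (componentwise) is a well-defined partial isomorphism; she wins if she survives all $k$ rounds. *)

theory Defs
  imports Main "HOL-Library.Extended_Nat"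
begin

text \<open>The finite set A of unary predicate symbols is rendered as a finite type 'a.\<close>

definition monadic_model :: "'d set \<Rightarrow> ('a \<Rightarrow> 'd set) \<Rightarrow> bool" where
  "monadic_model D V \<longleftrightarrow> (\<forall>a. V a \<subseteq> D)"

datatype 'a fml =
    FTrue
  | FFalse
  | Pred 'a nat
  | NPred 'a nat
  | Eq nat nat
  | NEq nat nat
  | Conj "'a fml" "'a fml"
  | Disj "'a fml" "'a fml"
  | Ex nat "'a fml"
  | All nat "'a fml"
  | ExInf nat "'a fml"
  | AllInf nat "'a fml"

fun fv :: "'a fml \<Rightarrow> nat set" where
  "fv FTrue = {}"
| "fv FFalse = {}"
| "fv (Pred a x) = {x}"
| "fv (NPred a x) = {x}"
| "fv (Eq x y) = {x, y}"
| "fv (NEq x y) = {x, y}"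
| "fv (Conj p q) = fv p \<union> fv q"
| "fv (Disj p q) = fv p \<union> fv q"
| "fv (Ex x p) = fv p - {x}"
| "fv (All x p) = fv p - {x}"
| "fv (ExInf x p) = fv p - {x}"
| "fv (AllInf x p) = fv p - {x}"

definition sentence :: "'a fml \<Rightarrow> bool" where
  "sentence p \<longleftrightarrow> fv p = {}"

fun qr :: "'a fml \<Rightarrow> nat" where
  "qr FTrue = 0"
| "qr FFalse = 0"
| "qr (Pred a x) = 0"
| "qr (NPred a x) = 0"
| "qr (Eq x y) = 0"
| "qr (NEq x y) = 0"
| "qr (Conj p q) = max (qr p) (qr q)"
| "qr (Disj p q) = max (qr p) (qr q)"
| "qr (Ex x p) = Suc (qr p)"
| "qr (All x p) = Suc (qr p)"
| "qr (ExInf x p) = Suc (qr p)"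
| "qr (AllInf x p) = Suc (qr p)"

text \<open>Semantics relative to an assignment g.  Quantifiers range over D, so on the
  empty model the existential quantifiers are false and the universal ones true.\<close>

fun eval :: "'d set \<Rightarrow> ('a \<Rightarrow> 'd set) \<Rightarrow> (nat \<Rightarrow> 'd) \<Rightarrow> 'a fml \<Rightarrow> bool" where
  "eval D V g FTrue = True"
| "eval D V g FFalse = False"
| "eval D V g (Pred a x) = (g x \<in> V a)"
| "eval D V g (NPred a x) = (g x \<notin> V a)"
| "eval D V g (Eq x y) = (g x = g y)"
| "eval D V g (NEq x y) = (g x \<noteq> g y)"
| "eval D V g (Conj p q) = (eval D V g p \<and> eval D V g q)"
| "eval D V g (Disj p q) = (eval D V g p \<or> eval D V g q)"
| "eval D V g (Ex x p) = (\<exists>d\<in>D. eval D V (g(x := d)) p)"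
| "eval D V g (All x p) = (\<forall>d\<in>D. eval D V (g(x := d)) p)"
| "eval D V g (ExInf x p) = infinite {d\<in>D. eval D V (g(x := d)) p}"
| "eval D V g (AllInf x p) = finite {d\<in>D. \<not> eval D V (g(x := d)) p}"

text \<open>Truth of a sentence (for sentences the assignment is irrelevant).\<close>

definition sat :: "'d set \<Rightarrow> ('a \<Rightarrow> 'd set) \<Rightarrow> 'a fml \<Rightarrow> bool" where
  "sat D V p \<longleftrightarrow> (\<forall>g. eval D V g p)"

definition type_count :: "'d set \<Rightarrow> ('a \<Rightarrow> 'd set) \<Rightarrow> 'a set \<Rightarrow> enat" where
  "type_count D V S =
     (let X = {d\<in>D. {a. d \<in> V a} = S} in if finite X then enat (card X) else \<infinity>)"

definition sim_inf ::
  "nat \<Rightarrow> 'd set \<Rightarrow> ('a \<Rightarrow> 'd set) \<Rightarrow> 'e set \<Rightarrow> ('a \<Rightarrow> 'e set) \<Rightarrow> bool" where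
  "sim_inf k D0 V0 D1 V1 \<longleftrightarrow>
     (k = 0 \<or>
      (\<forall>S. let c0 = type_count D0 V0 S; c1 = type_count D1 V1 S in
         (c0 = c1 \<and> c0 < enat k)
       \<or> (enat k \<le> c0 \<and> c0 < \<infinity> \<and> enat k \<le> c1 \<and> c1 < \<infinity>)
       \<or> (c0 = \<infinity> \<and> c1 = \<infinity>)))"

definition part_iso :: "('a \<Rightarrow> 'd set) \<Rightarrow> ('a \<Rightarrow> 'e set) \<Rightarrow> 'd list \<Rightarrow> 'e list \<Rightarrow> bool" where
  "part_iso V0 V1 s0 s1 \<longleftrightarrow> length s0 = length s1 \<and>
     (\<forall>i<length s0. \<forall>j<length s0. (s0 ! i = s0 ! j \<longleftrightarrow> s1 ! i = s1 ! j)) \<and>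
     (\<forall>i<length s0. \<forall>a. (s0 ! i \<in> V0 a \<longleftrightarrow> s1 ! i \<in> V1 a))"

text \<open>ewins n s0 s1: player \<exists> has a winning strategy in the remaining n rounds of
  the game EF-infinity starting from position (s0, s1).  Since the game is finite and
  of perfect information, having a winning strategy is characterised by backward
  induction on the number of remaining rounds: for every move of \<forall> (first-order
  or second-order, in either model) \<exists> has a response after which she survives the
  round and still wins the remaining game.\<close>

fun ewins :: "'d set \<Rightarrow> ('a \<Rightarrow> 'd set) \<Rightarrow> 'e set \<Rightarrow> ('a \<Rightarrow> 'e set) \<Rightarrow>
    nat \<Rightarrow> 'd list \<Rightarrow> 'e list \<Rightarrow> bool" where
  "ewins D0 V0 D1 V1 0 s0 s1 = True"
| "ewins D0 V0 D1 V1 (Suc n) s0 s1 =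
    (let good = (\<lambda>d0 d1. part_iso V0 V1 (s0 @ [d0]) (s1 @ [d1])
                          \<and> ewins D0 V0 D1 V1 n (s0 @ [d0]) (s1 @ [d1])) in
      \<comment> \<open>first-order move in D0\<close>
      (\<forall>d0\<in>D0. \<exists>d1\<in>D1. good d0 d1) \<and>
      \<comment> \<open>first-order move in D1\<close>
      (\<forall>d1\<in>D1. \<exists>d0\<in>D0. good d0 d1) \<and>
      \<comment> \<open>second-order move starting in D0\<close>
      (\<forall>X0. X0 \<subseteq> D0 \<and> infinite X0 \<longrightarrow>
         (\<exists>X1. X1 \<subseteq> D1 \<and> infinite X1 \<and> (\<forall>d1\<in>X1. \<exists>d0\<in>X0. good d0 d1))) \<and>
      \<comment> \<open>second-order move starting in D1\<close>
      (\<forall>X1. X1 \<subseteq> D1 \<and> infinite X1 \<longrightarrow>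
         (\<exists>X0. X0 \<subseteq> D0 \<and> infinite X0 \<and> (\<forall>d0\<in>X0. \<exists>d1\<in>X1. good d0 d1))))"

definition EF_inf_exists_wins ::
  "nat \<Rightarrow> 'd set \<Rightarrow> ('a \<Rightarrow> 'd set) \<Rightarrow> 'e set \<Rightarrow> ('a \<Rightarrow> 'e set) \<Rightarrow> bool" where
  "EF_inf_exists_wins k D0 V0 D1 V1 \<longleftrightarrow> ewins D0 V0 D1 V1 k [] []"

end

theory Submission
  imports Defs
begin

definition tp :: "('a \<Rightarrow> 'd set) \<Rightarrow> 'd \<Rightarrow> 'a set" where "tp V d = {a. d \<in> V a}"
definition cls :: "'d set \<Rightarrow> ('a \<Rightarrow> 'd set) \<Rightarrow> 'a set \<Rightarrow> 'd set" where
  "cls D V S = {d\<in>D. tp V d = S}"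

definition rel :: "nat \<Rightarrow> 'd set \<Rightarrow> 'e set \<Rightarrow> bool" where
 "rel n A B \<longleftrightarrow> (finite A \<and> finite B \<and> card A = card B \<and> card A < n)
   \<or> (finite A \<and> finite B \<and> n \<le> card A \<and> n \<le> card B) \<or> (infinite A \<and> infinite B)"

lemma tc_rel:
  "(let c0 = type_count D0 V0 S; c1 = type_count D1 V1 S in
         (c0 = c1 \<and> c0 < enat k)
       \<or> (enat k \<le> c0 \<and> c0 < \<infinity> \<and> enat k \<le> c1 \<and> c1 < \<infinity>)
       \<or> (c0 = \<infinity> \<and> c1 = \<infinity>)) \<longleftrightarrow> rel k (cls D0 V0 S) (cls D1 V1 S)"
  unfolding type_count_def cls_def tp_def Let_def rel_def
  by auto

lemma sim_inf_rel: "sim_inf n D0 V0 D1 V1 \<longleftrightarrow> n = 0 \<or> (\<forall>S. rel n (cls D0 V0 S) (cls D1 V1 S))"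
  unfolding sim_inf_def tc_rel by simp

lemma rel_mono: "rel (Suc n) A B \<Longrightarrow> rel n A B"
  unfolding rel_def by auto

lemma rel_remove: "rel (Suc n) A B \<Longrightarrow> a \<in> A \<Longrightarrow> b \<in> B \<Longrightarrow> rel n (A - {a}) (B - {b})"
  unfolding rel_def by (auto simp: card_Diff_singleton)

lemma rel_nonempty: "rel (Suc n) A B \<Longrightarrow> a \<in> A \<Longrightarrow> \<exists>b. b \<in> B"
  unfolding rel_def by (cases "B = {}") auto

lemma rel_infinite: "rel n A B \<Longrightarrow> infinite A \<Longrightarrow> infinite B"
  unfolding rel_def by auto

lemma rel_sym: "rel n A B \<Longrightarrow> rel n B A"
  unfolding rel_def by auto

lemma sim_inf_mono: "sim_inf (Suc n) D0 V0 D1 V1 \<Longrightarrow> sim_inf n D0 V0 D1 V1"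
  unfolding sim_inf_rel using rel_mono by blast

lemma sim_inf_sym: "sim_inf n D0 V0 D1 V1 \<Longrightarrow> sim_inf n D1 V1 D0 V0"
  unfolding sim_inf_rel using rel_sym by blast

lemma part_iso_sym: "part_iso V0 V1 s0 s1 \<Longrightarrow> part_iso V1 V0 s1 s0"
  unfolding part_iso_def by auto

lemma part_iso_snoc:
  assumes "part_iso V0 V1 s0 s1" "\<forall>i<length s0. s0!i = d0 \<longleftrightarrow> s1!i = d1" "tp V0 d0 = tp V1 d1"
  shows "part_iso V0 V1 (s0@[d0]) (s1@[d1])"
proof -
  have t: "\<forall>a. d0 \<in> V0 a \<longleftrightarrow> d1 \<in> V1 a" using assms(3) unfolding tp_def by blast
  show ?thesis using assms(1,2) t unfolding part_iso_def
    by (auto simp: nth_append less_Suc_eq)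
qed

definition Inv where
  "Inv D0 V0 D1 V1 n s0 s1 \<longleftrightarrow> part_iso V0 V1 s0 s1 \<and> set s0 \<subseteq> D0 \<and> set s1 \<subseteq> D1
     \<and> sim_inf n (D0 - set s0) V0 (D1 - set s1) V1"

lemma Inv_sym: "Inv D0 V0 D1 V1 n s0 s1 \<Longrightarrow> Inv D1 V1 D0 V0 n s1 s0"
  unfolding Inv_def using part_iso_sym sim_inf_sym by blast

lemma cls_remove: "cls (A - insert d B) V S = (if tp V d = S then cls (A - B) V S - {d} else cls (A - B) V S)"
  unfolding cls_def by auto

lemma Inv_new:
  assumes I: "Inv D0 V0 D1 V1 (Suc n) s0 s1" and "d0 \<in> D0" "d0 \<notin> set s0" "d1 \<in> D1" "d1 \<notin> set s1"
    and t: "tp V0 d0 = tp V1 d1"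
  shows "Inv D0 V0 D1 V1 n (s0@[d0]) (s1@[d1])"
proof -
  have p: "part_iso V0 V1 s0 s1" and s: "set s0 \<subseteq> D0" "set s1 \<subseteq> D1"
    and r: "\<And>S. rel (Suc n) (cls (D0 - set s0) V0 S) (cls (D1 - set s1) V1 S)"
    using I unfolding Inv_def sim_inf_rel by auto
  have len: "length s0 = length s1" using p unfolding part_iso_def by simp
  have "part_iso V0 V1 (s0@[d0]) (s1@[d1])"
    using part_iso_snoc[OF p _ t] assms(3,5) len by (metis nth_mem)
  moreover have "sim_inf n (D0 - set (s0@[d0])) V0 (D1 - set (s1@[d1])) V1"
    unfolding sim_inf_rel
  proof (intro disjI2 allI)
    fix S
    show "rel n (cls (D0 - set (s0 @ [d0])) V0 S) (cls (D1 - set (s1 @ [d1])) V1 S)"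
    proof (cases "tp V0 d0 = S")
      case True
      have "d0 \<in> cls (D0 - set s0) V0 S" "d1 \<in> cls (D1 - set s1) V1 S"
        using True t assms unfolding cls_def by auto
      then show ?thesis using rel_remove[OF r[of S]] True t by (simp add: cls_remove)
    next
      case False
      then show ?thesis using r[of S] rel_mono t by (simp add: cls_remove)
    qed
  qed
  ultimately show ?thesis using s assms unfolding Inv_def by auto
qed

lemma Inv_old:
  assumes I: "Inv D0 V0 D1 V1 (Suc n) s0 s1" and i: "i < length s0"
  shows "Inv D0 V0 D1 V1 n (s0@[s0!i]) (s1@[s1!i])"
proof -
  have p: "part_iso V0 V1 s0 s1" using I unfolding Inv_def by auto
  have "tp V0 (s0!i) = tp V1 (s1!i)" using p i unfolding part_iso_def tp_def by auto
  moreover have "\<forall>j<length s0. s0!j = s0!i \<longleftrightarrow> s1!j = s1!i" using p i unfolding part_iso_def by auto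
  ultimately have "part_iso V0 V1 (s0@[s0!i]) (s1@[s1!i])" using part_iso_snoc[OF p] by blast
  moreover have "length s0 = length s1" using p unfolding part_iso_def by auto
  ultimately show ?thesis using I i sim_inf_mono unfolding Inv_def
    by (auto simp: insert_absorb)
qed

lemma resp_fo:
  assumes I: "Inv D0 V0 D1 V1 (Suc n) s0 s1" and d0: "d0 \<in> D0"
  shows "\<exists>d1\<in>D1. Inv D0 V0 D1 V1 n (s0@[d0]) (s1@[d1])"
proof (cases "d0 \<in> set s0")
  case True
  then obtain i where i: "i < length s0" "d0 = s0!i" by (auto simp: in_set_conv_nth)
  have "length s0 = length s1" "set s1 \<subseteq> D1" using I unfolding Inv_def part_iso_def by auto
  then have "s1!i \<in> D1" using i by (metis nth_mem subsetD)
  then show ?thesis using Inv_old[OF I i(1)] i by auto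
next
  case False
  have r: "rel (Suc n) (cls (D0 - set s0) V0 (tp V0 d0)) (cls (D1 - set s1) V1 (tp V0 d0))"
    using I unfolding Inv_def sim_inf_rel by auto
  have "d0 \<in> cls (D0 - set s0) V0 (tp V0 d0)" using False d0 unfolding cls_def by auto
  then obtain d1 where "d1 \<in> cls (D1 - set s1) V1 (tp V0 d0)" using rel_nonempty[OF r] by blast
  then show ?thesis using Inv_new[OF I d0 False] unfolding cls_def by auto
qed

lemma pigeon:
  fixes f :: "'d \<Rightarrow> 'b"
  assumes "infinite A" "finite (UNIV :: 'b set)"
  shows "\<exists>S. infinite {d\<in>A. f d = S}"
proof (rule ccontr)
  assume "\<not> ?thesis"
  then have "finite (\<Union>S\<in>UNIV. {d\<in>A. f d = S})" using assms(2) by auto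
  moreover have "(\<Union>S\<in>UNIV. {d\<in>A. f d = S}) = A" by auto
  ultimately show False using assms(1) by simp
qed

lemma resp_so:
  fixes V0 :: "'a::finite \<Rightarrow> 'd set"
  assumes I: "Inv D0 V0 D1 V1 (Suc n) s0 s1" and X0: "X0 \<subseteq> D0" "infinite X0"
  shows "\<exists>X1. X1 \<subseteq> D1 \<and> infinite X1 \<and> (\<forall>d1\<in>X1. \<exists>d0\<in>X0. Inv D0 V0 D1 V1 n (s0@[d0]) (s1@[d1]))"
proof -
  have "infinite (X0 - set s0)" using X0 by (simp add: Diff_infinite_finite)
  then obtain S where S: "infinite {d\<in>X0 - set s0. tp V0 d = S}"
    using pigeon[of "X0 - set s0" "tp V0"] by auto
  have r: "rel (Suc n) (cls (D0 - set s0) V0 S) (cls (D1 - set s1) V1 S)"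
    using I unfolding Inv_def sim_inf_rel by auto
  have "{d\<in>X0 - set s0. tp V0 d = S} \<subseteq> cls (D0 - set s0) V0 S" using X0 unfolding cls_def by auto
  then have "infinite (cls (D0 - set s0) V0 S)" using S infinite_super by blast
  then have inf1: "infinite (cls (D1 - set s1) V1 S)" using rel_infinite[OF r] by blast
  obtain e where e: "e \<in> {d\<in>X0 - set s0. tp V0 d = S}" using S infinite_imp_nonempty by blast
  show ?thesis
  proof (intro exI conjI ballI)
    show "cls (D1 - set s1) V1 S \<subseteq> D1" unfolding cls_def by auto
    show "infinite (cls (D1 - set s1) V1 S)" by (rule inf1)
    fix d1 assume "d1 \<in> cls (D1 - set s1) V1 S"
    then show "\<exists>d0\<in>X0. Inv D0 V0 D1 V1 n (s0 @ [d0]) (s1 @ [d1])"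
      using e Inv_new[OF I, of e d1] X0 unfolding cls_def by auto
  qed
qed

lemma Inv_ewins:
  fixes V0 :: "'a::finite \<Rightarrow> 'd set"
  shows "Inv D0 V0 D1 V1 n s0 s1 \<Longrightarrow> ewins D0 V0 D1 V1 n s0 s1"
proof (induction n arbitrary: s0 s1)
  case 0
  then show ?case by simp
next
  case (Suc n)
  have good: "part_iso V0 V1 (s0@[d0]) (s1@[d1]) \<and> ewins D0 V0 D1 V1 n (s0@[d0]) (s1@[d1])"
    if "Inv D0 V0 D1 V1 n (s0@[d0]) (s1@[d1])" for d0 d1
    using that Suc.IH unfolding Inv_def by blast
  have I': "Inv D1 V1 D0 V0 (Suc n) s1 s0" using Inv_sym[OF Suc.prems] .
  let ?g = "\<lambda>d0 d1. part_iso V0 V1 (s0@[d0]) (s1@[d1]) \<and> ewins D0 V0 D1 V1 n (s0@[d0]) (s1@[d1])"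
  have c1: "\<forall>d0\<in>D0. \<exists>d1\<in>D1. ?g d0 d1"
  proof
    fix d0 assume "d0 \<in> D0"
    then obtain d1 where h: "d1 \<in> D1" "Inv D0 V0 D1 V1 n (s0@[d0]) (s1@[d1])"
      using resp_fo[OF Suc.prems] by blast
    show "\<exists>d1\<in>D1. ?g d0 d1" using h(1) good[OF h(2)] by blast
  qed
  have c2: "\<forall>d1\<in>D1. \<exists>d0\<in>D0. ?g d0 d1"
  proof
    fix d1 assume "d1 \<in> D1"
    then obtain d0 where h: "d0 \<in> D0" "Inv D1 V1 D0 V0 n (s1@[d1]) (s0@[d0])"
      using resp_fo[OF I'] by blast
    show "\<exists>d0\<in>D0. ?g d0 d1" using h(1) good[OF Inv_sym[OF h(2)]] by blast
  qed
  have c3: "\<forall>X0. X0 \<subseteq> D0 \<and> infinite X0 \<longrightarrow>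
         (\<exists>X1. X1 \<subseteq> D1 \<and> infinite X1 \<and> (\<forall>d1\<in>X1. \<exists>d0\<in>X0. ?g d0 d1))"
  proof (intro allI impI)
    fix X0 assume hX: "X0 \<subseteq> D0 \<and> infinite X0"
    obtain X1 where X1: "X1 \<subseteq> D1" "infinite X1"
       "\<forall>d1\<in>X1. \<exists>d0\<in>X0. Inv D0 V0 D1 V1 n (s0@[d0]) (s1@[d1])"
      using resp_so[OF Suc.prems conjunct1[OF hX] conjunct2[OF hX]] by blast
    have "\<forall>d1\<in>X1. \<exists>d0\<in>X0. ?g d0 d1"
    proof
      fix d1 assume "d1 \<in> X1"
      then obtain d0 where "d0 \<in> X0" "Inv D0 V0 D1 V1 n (s0@[d0]) (s1@[d1])" using X1(3) by blast
      then show "\<exists>d0\<in>X0. ?g d0 d1" using good by blast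
    qed
    then show "\<exists>X1. X1 \<subseteq> D1 \<and> infinite X1 \<and> (\<forall>d1\<in>X1. \<exists>d0\<in>X0. ?g d0 d1)"
      using X1(1,2) by blast
  qed
  have c4: "\<forall>X1. X1 \<subseteq> D1 \<and> infinite X1 \<longrightarrow>
         (\<exists>X0. X0 \<subseteq> D0 \<and> infinite X0 \<and> (\<forall>d0\<in>X0. \<exists>d1\<in>X1. ?g d0 d1))"
  proof (intro allI impI)
    fix X1 assume hX: "X1 \<subseteq> D1 \<and> infinite X1"
    obtain X0 where X0: "X0 \<subseteq> D0" "infinite X0"
       "\<forall>d0\<in>X0. \<exists>d1\<in>X1. Inv D1 V1 D0 V0 n (s1@[d1]) (s0@[d0])"
      using resp_so[OF I' conjunct1[OF hX] conjunct2[OF hX]] by blast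
    have "\<forall>d0\<in>X0. \<exists>d1\<in>X1. ?g d0 d1"
    proof
      fix d0 assume "d0 \<in> X0"
      then obtain d1 where "d1 \<in> X1" "Inv D1 V1 D0 V0 n (s1@[d1]) (s0@[d0])" using X0(3) by blast
      then show "\<exists>d1\<in>X1. ?g d0 d1" using good[OF Inv_sym] by blast
    qed
    then show "\<exists>X0. X0 \<subseteq> D0 \<and> infinite X0 \<and> (\<forall>d0\<in>X0. \<exists>d1\<in>X1. ?g d0 d1)"
      using X0(1,2) by blast
  qed
  show ?case unfolding ewins.simps Let_def using c1 c2 c3 c4 by (intro conjI)
qed


lemma quant_lemma:
  assumes fo0: "\<forall>d0\<in>D0. \<exists>d1\<in>D1. G d0 d1" and fo1: "\<forall>d1\<in>D1. \<exists>d0\<in>D0. G d0 d1"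
    and so0: "\<forall>X0. X0 \<subseteq> D0 \<and> infinite X0 \<longrightarrow> (\<exists>X1. X1 \<subseteq> D1 \<and> infinite X1 \<and> (\<forall>d1\<in>X1. \<exists>d0\<in>X0. G d0 d1))"
    and so1: "\<forall>X1. X1 \<subseteq> D1 \<and> infinite X1 \<longrightarrow> (\<exists>X0. X0 \<subseteq> D0 \<and> infinite X0 \<and> (\<forall>d0\<in>X0. \<exists>d1\<in>X1. G d0 d1))"
    and key: "\<And>d0 d1. G d0 d1 \<Longrightarrow> P0 d0 = P1 d1"
  shows "(\<exists>d\<in>D0. P0 d) = (\<exists>d\<in>D1. P1 d)" "(\<forall>d\<in>D0. P0 d) = (\<forall>d\<in>D1. P1 d)"
    "infinite {d\<in>D0. P0 d} = infinite {d\<in>D1. P1 d}"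
    "finite {d\<in>D0. \<not> P0 d} = finite {d\<in>D1. \<not> P1 d}"
proof -
  show "(\<exists>d\<in>D0. P0 d) = (\<exists>d\<in>D1. P1 d)" using fo0 fo1 key by metis
  show "(\<forall>d\<in>D0. P0 d) = (\<forall>d\<in>D1. P1 d)" using fo0 fo1 key by metis
  show "infinite {d\<in>D0. P0 d} = infinite {d\<in>D1. P1 d}"
  proof
    assume a: "infinite {d\<in>D0. P0 d}"
    then obtain X1 where X1: "X1 \<subseteq> D1" "infinite X1" "\<forall>d1\<in>X1. \<exists>d0\<in>{d\<in>D0. P0 d}. G d0 d1"
      using so0 by (metis (no_types, lifting) mem_Collect_eq subsetI)
    have "X1 \<subseteq> {d\<in>D1. P1 d}" using X1 key by blast
    then show "infinite {d\<in>D1. P1 d}" using X1 infinite_super by blast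
  next
    assume a: "infinite {d\<in>D1. P1 d}"
    then obtain X0 where X0: "X0 \<subseteq> D0" "infinite X0" "\<forall>d0\<in>X0. \<exists>d1\<in>{d\<in>D1. P1 d}. G d0 d1"
      using so1 by (metis (no_types, lifting) mem_Collect_eq subsetI)
    have "X0 \<subseteq> {d\<in>D0. P0 d}" using X0 key by blast
    then show "infinite {d\<in>D0. P0 d}" using X0 infinite_super by blast
  qed
  show "finite {d\<in>D0. \<not> P0 d} = finite {d\<in>D1. \<not> P1 d}"
  proof
    assume f: "finite {d\<in>D0. \<not> P0 d}"
    show "finite {d\<in>D1. \<not> P1 d}"
    proof (rule ccontr)
      assume a: "infinite {d\<in>D1. \<not> P1 d}"
      then obtain X0 where X0: "X0 \<subseteq> D0" "infinite X0" "\<forall>d0\<in>X0. \<exists>d1\<in>{d\<in>D1. \<not> P1 d}. G d0 d1"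
        using so1 by (metis (no_types, lifting) mem_Collect_eq subsetI)
      have "X0 \<subseteq> {d\<in>D0. \<not> P0 d}" using X0 key by blast
      then show False using X0 f finite_subset by blast
    qed
  next
    assume f: "finite {d\<in>D1. \<not> P1 d}"
    show "finite {d\<in>D0. \<not> P0 d}"
    proof (rule ccontr)
      assume a: "infinite {d\<in>D0. \<not> P0 d}"
      then obtain X1 where X1: "X1 \<subseteq> D1" "infinite X1" "\<forall>d1\<in>X1. \<exists>d0\<in>{d\<in>D0. \<not> P0 d}. G d0 d1"
        using so0 by (metis (no_types, lifting) mem_Collect_eq subsetI)
      have "X1 \<subseteq> {d\<in>D1. \<not> P1 d}" using X1 key by blast
      then show False using X1 f finite_subset by blast
    qed
  qed
qed

lemma asg_ext:
  assumes "\<forall>y\<in>fv p - {x}. \<exists>i<length s0. g0 y = s0!i \<and> g1 y = s1!i" "length s0 = length s1"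
  shows "\<forall>y\<in>fv p. \<exists>i<length (s0@[d0]). (g0(x:=d0)) y = (s0@[d0])!i \<and> (g1(x:=d1)) y = (s1@[d1])!i"
proof
  fix y assume y: "y \<in> fv p"
  show "\<exists>i<length (s0@[d0]). (g0(x:=d0)) y = (s0@[d0])!i \<and> (g1(x:=d1)) y = (s1@[d1])!i"
  proof (cases "y = x")
    case True
    then show ?thesis using assms(2) by (intro exI[of _ "length s0"]) (simp add: nth_append)
  next
    case False
    then obtain i where "i < length s0" "g0 y = s0!i" "g1 y = s1!i" using assms(1) y by auto
    then show ?thesis using False assms(2) by (intro exI[of _ i]) (auto simp: nth_append)
  qed
qed

lemma game_eval:
  "ewins D0 V0 D1 V1 n s0 s1 \<Longrightarrow> part_iso V0 V1 s0 s1 \<Longrightarrow> qr p \<le> n \<Longrightarrow>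
   (\<forall>x\<in>fv p. \<exists>i<length s0. g0 x = s0!i \<and> g1 x = s1!i) \<Longrightarrow>
   eval D0 V0 g0 p = eval D1 V1 g1 p"
proof (induction p arbitrary: n s0 s1 g0 g1)
  case (Pred a x)
  then show ?case unfolding part_iso_def by auto
next
  case (NPred a x)
  then show ?case unfolding part_iso_def by auto
next
  case (Eq x y)
  then show ?case unfolding part_iso_def by auto
next
  case (NEq x y)
  then show ?case unfolding part_iso_def by auto
next
  case (Conj p q)
  then show ?case by (metis UnCI eval.simps(7) fv.simps(7) max.bounded_iff qr.simps(7))
next
  case (Disj p q)
  then show ?case by (metis UnCI eval.simps(8) fv.simps(8) max.bounded_iff qr.simps(8))
next
  case (Ex x p)
  from Ex.prems(3) obtain m where n: "n = Suc m" "qr p \<le> m" by (cases n) auto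
  define G where "G = (\<lambda>d0 d1. part_iso V0 V1 (s0 @ [d0]) (s1 @ [d1])
                          \<and> ewins D0 V0 D1 V1 m (s0 @ [d0]) (s1 @ [d1]))"
  have W: "(\<forall>d0\<in>D0. \<exists>d1\<in>D1. G d0 d1) \<and> (\<forall>d1\<in>D1. \<exists>d0\<in>D0. G d0 d1) \<and>
      (\<forall>X0. X0 \<subseteq> D0 \<and> infinite X0 \<longrightarrow> (\<exists>X1. X1 \<subseteq> D1 \<and> infinite X1 \<and> (\<forall>d1\<in>X1. \<exists>d0\<in>X0. G d0 d1))) \<and>
      (\<forall>X1. X1 \<subseteq> D1 \<and> infinite X1 \<longrightarrow> (\<exists>X0. X0 \<subseteq> D0 \<and> infinite X0 \<and> (\<forall>d0\<in>X0. \<exists>d1\<in>X1. G d0 d1)))"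
    using Ex.prems(1) unfolding G_def n by (simp add: Let_def)
  have len: "length s0 = length s1" using Ex.prems(2) unfolding part_iso_def by simp
  have A: "\<forall>y\<in>fv p - {x}. \<exists>i<length s0. g0 y = s0!i \<and> g1 y = s1!i" using Ex.prems(4) by simp
  have key: "eval D0 V0 (g0(x:=d0)) p = eval D1 V1 (g1(x:=d1)) p" if "G d0 d1" for d0 d1
    using Ex.IH[OF _ _ n(2) asg_ext[OF A len]] that unfolding G_def by blast
  show ?case using quant_lemma(1)[of D0 D1 G, OF _ _ _ _ key] W by simp
next
  case (All x p)
  from All.prems(3) obtain m where n: "n = Suc m" "qr p \<le> m" by (cases n) auto
  define G where "G = (\<lambda>d0 d1. part_iso V0 V1 (s0 @ [d0]) (s1 @ [d1])
                          \<and> ewins D0 V0 D1 V1 m (s0 @ [d0]) (s1 @ [d1]))"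
  have W: "(\<forall>d0\<in>D0. \<exists>d1\<in>D1. G d0 d1) \<and> (\<forall>d1\<in>D1. \<exists>d0\<in>D0. G d0 d1) \<and>
      (\<forall>X0. X0 \<subseteq> D0 \<and> infinite X0 \<longrightarrow> (\<exists>X1. X1 \<subseteq> D1 \<and> infinite X1 \<and> (\<forall>d1\<in>X1. \<exists>d0\<in>X0. G d0 d1))) \<and>
      (\<forall>X1. X1 \<subseteq> D1 \<and> infinite X1 \<longrightarrow> (\<exists>X0. X0 \<subseteq> D0 \<and> infinite X0 \<and> (\<forall>d0\<in>X0. \<exists>d1\<in>X1. G d0 d1)))"
    using All.prems(1) unfolding G_def n by (simp add: Let_def)
  have len: "length s0 = length s1" using All.prems(2) unfolding part_iso_def by simp
  have A: "\<forall>y\<in>fv p - {x}. \<exists>i<length s0. g0 y = s0!i \<and> g1 y = s1!i" using All.prems(4) by simp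
  have key: "eval D0 V0 (g0(x:=d0)) p = eval D1 V1 (g1(x:=d1)) p" if "G d0 d1" for d0 d1
    using All.IH[OF _ _ n(2) asg_ext[OF A len]] that unfolding G_def by blast
  show ?case using quant_lemma(2)[of D0 D1 G, OF _ _ _ _ key] W by simp
next
  case (ExInf x p)
  from ExInf.prems(3) obtain m where n: "n = Suc m" "qr p \<le> m" by (cases n) auto
  define G where "G = (\<lambda>d0 d1. part_iso V0 V1 (s0 @ [d0]) (s1 @ [d1])
                          \<and> ewins D0 V0 D1 V1 m (s0 @ [d0]) (s1 @ [d1]))"
  have W: "(\<forall>d0\<in>D0. \<exists>d1\<in>D1. G d0 d1) \<and> (\<forall>d1\<in>D1. \<exists>d0\<in>D0. G d0 d1) \<and>
      (\<forall>X0. X0 \<subseteq> D0 \<and> infinite X0 \<longrightarrow> (\<exists>X1. X1 \<subseteq> D1 \<and> infinite X1 \<and> (\<forall>d1\<in>X1. \<exists>d0\<in>X0. G d0 d1))) \<and>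
      (\<forall>X1. X1 \<subseteq> D1 \<and> infinite X1 \<longrightarrow> (\<exists>X0. X0 \<subseteq> D0 \<and> infinite X0 \<and> (\<forall>d0\<in>X0. \<exists>d1\<in>X1. G d0 d1)))"
    using ExInf.prems(1) unfolding G_def n by (simp add: Let_def)
  have len: "length s0 = length s1" using ExInf.prems(2) unfolding part_iso_def by simp
  have A: "\<forall>y\<in>fv p - {x}. \<exists>i<length s0. g0 y = s0!i \<and> g1 y = s1!i" using ExInf.prems(4) by simp
  have key: "eval D0 V0 (g0(x:=d0)) p = eval D1 V1 (g1(x:=d1)) p" if "G d0 d1" for d0 d1
    using ExInf.IH[OF _ _ n(2) asg_ext[OF A len]] that unfolding G_def by blast
  show ?case using quant_lemma(3)[of D0 D1 G, OF _ _ _ _ key] W by simp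
next
  case (AllInf x p)
  from AllInf.prems(3) obtain m where n: "n = Suc m" "qr p \<le> m" by (cases n) auto
  define G where "G = (\<lambda>d0 d1. part_iso V0 V1 (s0 @ [d0]) (s1 @ [d1])
                          \<and> ewins D0 V0 D1 V1 m (s0 @ [d0]) (s1 @ [d1]))"
  have W: "(\<forall>d0\<in>D0. \<exists>d1\<in>D1. G d0 d1) \<and> (\<forall>d1\<in>D1. \<exists>d0\<in>D0. G d0 d1) \<and>
      (\<forall>X0. X0 \<subseteq> D0 \<and> infinite X0 \<longrightarrow> (\<exists>X1. X1 \<subseteq> D1 \<and> infinite X1 \<and> (\<forall>d1\<in>X1. \<exists>d0\<in>X0. G d0 d1))) \<and>
      (\<forall>X1. X1 \<subseteq> D1 \<and> infinite X1 \<longrightarrow> (\<exists>X0. X0 \<subseteq> D0 \<and> infinite X0 \<and> (\<forall>d0\<in>X0. \<exists>d1\<in>X1. G d0 d1)))"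
    using AllInf.prems(1) unfolding G_def n by (simp add: Let_def)
  have len: "length s0 = length s1" using AllInf.prems(2) unfolding part_iso_def by simp
  have A: "\<forall>y\<in>fv p - {x}. \<exists>i<length s0. g0 y = s0!i \<and> g1 y = s1!i" using AllInf.prems(4) by simp
  have key: "eval D0 V0 (g0(x:=d0)) p = eval D1 V1 (g1(x:=d1)) p" if "G d0 d1" for d0 d1
    using AllInf.IH[OF _ _ n(2) asg_ext[OF A len]] that unfolding G_def by blast
  show ?case using quant_lemma(4)[of D0 D1 G, OF _ _ _ _ key] W by simp
qed simp_all


definition enumA :: "'a::finite list" where "enumA = (SOME xs. set xs = UNIV)"

lemma set_enumA: "set (enumA :: 'a::finite list) = UNIV"
  unfolding enumA_def by (rule someI_ex) (rule finite_list[OF finite_UNIV])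

fun tauL :: "'a set \<Rightarrow> nat \<Rightarrow> 'a list \<Rightarrow> 'a fml" where
  "tauL S x [] = FTrue"
| "tauL S x (a # as) = Conj (if a \<in> S then Pred a x else NPred a x) (tauL S x as)"

lemma eval_tauL: "eval D V g (tauL S x as) \<longleftrightarrow> (\<forall>a\<in>set as. g x \<in> V a \<longleftrightarrow> a \<in> S)"
  by (induction as) auto
lemma fv_tauL: "fv (tauL S x as) \<subseteq> {x}" by (induction as) auto
lemma qr_tauL: "qr (tauL S x as) = 0" by (induction as) auto

definition tau :: "'a::finite set \<Rightarrow> nat \<Rightarrow> 'a fml" where "tau S x = tauL S x enumA"

lemma eval_tau: "eval D V g (tau S x) \<longleftrightarrow> tp V (g x) = S"
  unfolding tau_def eval_tauL set_enumA tp_def by auto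
lemma fv_tau: "fv (tau S x) \<subseteq> {x}" unfolding tau_def by (rule fv_tauL)
lemma qr_tau: "qr (tau S x) = 0" unfolding tau_def by (rule qr_tauL)

fun neqs :: "nat \<Rightarrow> nat \<Rightarrow> 'a fml" where
  "neqs 0 j = FTrue"
| "neqs (Suc i) j = Conj (NEq i j) (neqs i j)"

lemma eval_neqs: "eval D V g (neqs i j) \<longleftrightarrow> (\<forall>l<i. g l \<noteq> g j)"
  by (induction i) (auto simp: less_Suc_eq)
lemma fv_neqs: "fv (neqs i j) \<subseteq> insert j {..<i}" by (induction i) auto
lemma qr_neqs: "qr (neqs i j) = 0" by (induction i) auto

fun al :: "'a::finite set \<Rightarrow> nat \<Rightarrow> nat \<Rightarrow> 'a fml" where
  "al S j 0 = FTrue"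
| "al S j (Suc m) = Ex j (Conj (tau S j) (Conj (neqs j j) (al S (Suc j) m)))"

lemma fv_al: "fv (al S j m) \<subseteq> {..<j}"
proof (induction m arbitrary: j)
  case 0 then show ?case by simp
next
  case (Suc m)
  show ?case using Suc.IH[of "Suc j"] fv_tau[of S j] fv_neqs[of j j] by auto
qed

lemma qr_al: "qr (al S j m) = m"
  by (induction m arbitrary: j) (auto simp: qr_tau qr_neqs)

lemma img_upd: "(g(j:=d)) ` {..<Suc j} = insert d (g ` {..<j})"
proof -
  have B: "(g(j:=d)) ` {..<j} = g ` {..<j}" by (intro image_cong) auto
  show ?thesis unfolding lessThan_Suc image_insert fun_upd_same B ..
qed

lemma eval_al: "eval D V g (al S j m) \<longleftrightarrow> (\<exists>F. F \<subseteq> cls D V S - g ` {..<j} \<and> finite F \<and> card F = m)"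
proof (induction m arbitrary: j g)
  case 0
  have "{} \<subseteq> cls D V S - g ` {..<j} \<and> finite {} \<and> card {} = (0::nat)" by simp
  then show ?case by (simp only: al.simps eval.simps) blast
next
  case (Suc m)
  have "eval D V g (al S j (Suc m)) \<longleftrightarrow>
     (\<exists>d\<in>D. tp V d = S \<and> (\<forall>l<j. g l \<noteq> d) \<and>
        (\<exists>F. F \<subseteq> cls D V S - insert d (g ` {..<j}) \<and> finite F \<and> card F = m))"
  proof -
    have e1: "eval D V (g(j:=d)) (tau S j) \<longleftrightarrow> tp V d = S" for d by (simp add: eval_tau)
    have e2: "eval D V (g(j:=d)) (neqs j j) \<longleftrightarrow> (\<forall>l<j. g l \<noteq> d)" for d
      by (simp add: eval_neqs)
    have e3: "eval D V (g(j:=d)) (al S (Suc j) m) \<longleftrightarrow>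
        (\<exists>F. F \<subseteq> cls D V S - insert d (g ` {..<j}) \<and> finite F \<and> card F = m)" for d
      unfolding Suc.IH img_upd ..
    show ?thesis by (simp only: al.simps eval.simps e1 e2 e3)
  qed
  also have "\<dots> \<longleftrightarrow> (\<exists>F. F \<subseteq> cls D V S - g ` {..<j} \<and> finite F \<and> card F = Suc m)"
  proof
    assume "\<exists>d\<in>D. tp V d = S \<and> (\<forall>l<j. g l \<noteq> d) \<and>
        (\<exists>F. F \<subseteq> cls D V S - insert d (g ` {..<j}) \<and> finite F \<and> card F = m)"
    then obtain d F where d: "d \<in> D" "tp V d = S" "\<forall>l<j. g l \<noteq> d"
      and F: "F \<subseteq> cls D V S - insert d (g ` {..<j})" "finite F" "card F = m" by blast
    have dn: "d \<notin> g ` {..<j}" using d(3) by auto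
    have dc: "d \<in> cls D V S" using d(1,2) unfolding cls_def by simp
    have F1: "F \<subseteq> cls D V S - g ` {..<j}" using F(1) by blast
    have dF: "d \<notin> F" using F(1) by blast
    have s1: "insert d F \<subseteq> cls D V S - g ` {..<j}" using dn dc F1 by blast
    have s2: "card (insert d F) = Suc m" using F(2,3) dF by simp
    have s3: "finite (insert d F)" using F(2) by simp
    show "\<exists>F. F \<subseteq> cls D V S - g ` {..<j} \<and> finite F \<and> card F = Suc m"
      using s1 s2 s3 by blast
  next
    assume "\<exists>F. F \<subseteq> cls D V S - g ` {..<j} \<and> finite F \<and> card F = Suc m"
    then obtain F where F: "F \<subseteq> cls D V S - g ` {..<j}" "finite F" "card F = Suc m" by blast
    have "F \<noteq> {}" using F(3) by auto
    then obtain d where d: "d \<in> F" by blast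
    have s1: "F - {d} \<subseteq> cls D V S - insert d (g ` {..<j})" using F(1) by blast
    have s2: "card (F - {d}) = m" using F(2,3) d by simp
    have s3: "finite (F - {d})" using F(2) by simp
    have dm: "d \<in> cls D V S" "d \<notin> g ` {..<j}" using F(1) d by blast+
    have t1: "d \<in> D" "tp V d = S" using dm(1) unfolding cls_def by simp_all
    have t2: "\<forall>l<j. g l \<noteq> d"
    proof (intro allI impI)
      fix l assume "l < j"
      then have "g l \<in> g ` {..<j}" by simp
      then show "g l \<noteq> d" using dm(2) by metis
    qed
    show "\<exists>d\<in>D. tp V d = S \<and> (\<forall>l<j. g l \<noteq> d) \<and>
        (\<exists>F. F \<subseteq> cls D V S - insert d (g ` {..<j}) \<and> finite F \<and> card F = m)"
      using t1 t2 s1 s2 s3 by blast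
  qed
  finally show ?case .
qed

lemma sat_al: "sat D V (al S 0 m) \<longleftrightarrow> (infinite (cls D V S) \<or> m \<le> card (cls D V S))"
proof -
  have "sat D V (al S 0 m) \<longleftrightarrow> (\<exists>F. F \<subseteq> cls D V S \<and> finite F \<and> card F = m)"
    unfolding sat_def eval_al by simp
  also have "\<dots> \<longleftrightarrow> (infinite (cls D V S) \<or> m \<le> card (cls D V S))"
  proof
    assume "\<exists>F. F \<subseteq> cls D V S \<and> finite F \<and> card F = m"
    then show "infinite (cls D V S) \<or> m \<le> card (cls D V S)" using card_mono by blast
  next
    assume a: "infinite (cls D V S) \<or> m \<le> card (cls D V S)"
    show "\<exists>F. F \<subseteq> cls D V S \<and> finite F \<and> card F = m"
    proof (cases "finite (cls D V S)")
      case True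
      then show ?thesis using a obtain_subset_with_card_n[of m "cls D V S"]
        by (metis finite_subset)
    next
      case False
      then show ?thesis using infinite_arbitrarily_large by blast
    qed
  qed
  finally show ?thesis .
qed

lemma sat_inf: "sat D V (ExInf 0 (tau S 0)) \<longleftrightarrow> infinite (cls D V S)"
  unfolding sat_def by (simp add: eval_tau cls_def)

lemma sent_al: "sentence (al S 0 m)"
  unfolding sentence_def using fv_al[of S 0 m] by auto

lemma sent_inf: "sentence (ExInf 0 (tau S 0))"
  unfolding sentence_def using fv_tau[of S 0] by auto

lemma qr_inf: "qr (ExInf 0 (tau S 0)) = 1" by (simp add: qr_tau)

lemma equiv_sim:
  fixes V0 :: "'a::finite \<Rightarrow> 'd set" and V1 :: "'a \<Rightarrow> 'e set"
  assumes E: "\<forall>p :: 'a fml. sentence p \<and> qr p \<le> k \<longrightarrow> (sat D0 V0 p \<longleftrightarrow> sat D1 V1 p)"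
  shows "sim_inf k D0 V0 D1 V1"
  unfolding sim_inf_rel
proof (cases "k = 0")
  case False
  show "k = 0 \<or> (\<forall>S. rel k (cls D0 V0 S) (cls D1 V1 S))"
  proof (intro disjI2 allI)
    fix S
    have i: "infinite (cls D0 V0 S) \<longleftrightarrow> infinite (cls D1 V1 S)"
    proof -
      have "sentence (ExInf 0 (tau S 0)) \<and> qr (ExInf 0 (tau S 0)) \<le> k"
        using sent_inf[of S] qr_inf[of S] False by (simp del: qr.simps)
      then have "sat D0 V0 (ExInf 0 (tau S 0)) \<longleftrightarrow> sat D1 V1 (ExInf 0 (tau S 0))" using E by blast
      then show ?thesis unfolding sat_inf .
    qed
    show "rel k (cls D0 V0 S) (cls D1 V1 S)"
    proof (cases "finite (cls D0 V0 S)")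
      case False then show ?thesis using i unfolding rel_def by auto
    next
      case True
      then have f1: "finite (cls D1 V1 S)" using i by auto
      define c0 where "c0 = card (cls D0 V0 S)"
      define c1 where "c1 = card (cls D1 V1 S)"
      show ?thesis
      proof (rule ccontr)
        assume nr: "\<not> ?thesis"
        then have ne: "c0 \<noteq> c1" "min c0 c1 < k" using True f1 unfolding rel_def c0_def c1_def by auto
        define m where "m = Suc (min c0 c1)"
        have "sentence (al S 0 m) \<and> qr (al S 0 m) \<le> k"
          using sent_al[of S m] qr_al[of S 0 m] ne(2) unfolding m_def by (simp del: al.simps)
        then have "sat D0 V0 (al S 0 m) \<longleftrightarrow> sat D1 V1 (al S 0 m)" using E by blast
        then have "m \<le> c0 \<longleftrightarrow> m \<le> c1" using sat_al True f1 unfolding c0_def c1_def by metis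
        then show False using ne unfolding m_def by auto
      qed
    qed
  qed
qed simp

theorem proposition3p10:
  fixes k :: nat
    and D0 :: "'d set" and V0 :: "'a::finite \<Rightarrow> 'd set"
    and D1 :: "'e set" and V1 :: "'a \<Rightarrow> 'e set"
  assumes "monadic_model D0 V0" and "monadic_model D1 V1"
  shows "((\<forall>p :: 'a fml. sentence p \<and> qr p \<le> k \<longrightarrow> (sat D0 V0 p \<longleftrightarrow> sat D1 V1 p))
            \<longleftrightarrow> sim_inf k D0 V0 D1 V1)
       \<and> (sim_inf k D0 V0 D1 V1 \<longleftrightarrow> EF_inf_exists_wins k D0 V0 D1 V1)"
proof -
  have SW: "EF_inf_exists_wins k D0 V0 D1 V1" if "sim_inf k D0 V0 D1 V1"
  proof -
    have "Inv D0 V0 D1 V1 k [] []" using that unfolding Inv_def part_iso_def by simp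
    then show ?thesis unfolding EF_inf_exists_wins_def by (rule Inv_ewins)
  qed
  have WE: "\<forall>p :: 'a fml. sentence p \<and> qr p \<le> k \<longrightarrow> (sat D0 V0 p \<longleftrightarrow> sat D1 V1 p)"
    if W: "EF_inf_exists_wins k D0 V0 D1 V1"
  proof (intro allI impI)
    fix p :: "'a fml" assume p: "sentence p \<and> qr p \<le> k"
    have ev: "eval D0 V0 g0 p = eval D1 V1 g1 p" for g0 g1
      using game_eval[of D0 V0 D1 V1 k "[]" "[]" p g0 g1] W p
      unfolding EF_inf_exists_wins_def part_iso_def sentence_def by simp
    show "sat D0 V0 p \<longleftrightarrow> sat D1 V1 p" unfolding sat_def using ev by blast
  qed
  show ?thesis using SW WE equiv_sim by blast
qed

end
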